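(* Let $\alpha\neq\beta$, let $(g_n)$ be as in the context, set $w=\dfrac{\beta-x}{\beta-\alpha}$ and $\Phi(y)=\dfrac{(\alpha-\beta)yw+\beta}{1-yw}$. Let $y=y(t)$ be the unique formal power series in $t$ with $y(0)=0$ satisfying $y=t\,\Phi(y)$. Then for all $n\ge0$, $$g_n(x)=[t^n]\,\frac{1}{1-y(t)},\qquad\text{i.e.}\qquad \sum_{n\ge0}g_n(x)\,t^n=\frac{1}{1-y(t)}.$$
   Context: Fix complex numbers $\alpha\neq\beta$. Define polynomials $g_n(x)\in\mathbb{C}[x]$ recursively by $g_0(x)=1$ and, for $n\ge1$, $$(x-\alpha)(\alpha-\beta)^{n-1}g_n(x)=\alpha(x-\beta)^n g_{n-1}(\alpha)-x(\alpha-\beta)^n g_{n-1}(x).$$ (The right-hand side vanishes at $x=\alpha$, so it is divisible by $x-\alpha$ and $g_n$ is a uniquely determined polynomial.) $[t^n]F(t)$ denotes the coefficient of $t^n$ in the formal power series $F$. *)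

theory Defs
  imports "HOL-Computational_Algebra.Polynomial" "HOL-Computational_Algebra.Formal_Power_Series"
begin

text \<open>The recursion
  (x-a)(a-b)^(n-1) g_n(x) = a (x-b)^n g_(n-1)(a) - x (a-b)^n g_(n-1)(x)
  is rendered as exact polynomial division (the right-hand side is divisible).\<close>
fun gpoly :: "complex \<Rightarrow> complex \<Rightarrow> nat \<Rightarrow> complex poly" where
  "gpoly a b 0 = 1"
| "gpoly a b (Suc n) =
     (smult (a * poly (gpoly a b n) a) ([:-b, 1:] ^ Suc n)
      - smult ((a - b) ^ Suc n) (pCons 0 (gpoly a b n)))
     div (smult ((a - b) ^ n) [:-a, 1:])"

definition Phi :: "complex \<Rightarrow> complex \<Rightarrow> complex \<Rightarrow> complex fps \<Rightarrow> complex fps" where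
  "Phi a b x y = (let w = (b - x) / (b - a) in
     (fps_const ((a - b) * w) * y + fps_const b) * inverse (1 - fps_const w * y))"

end

theory Submission
  imports Defs
begin
unbundle fps_syntax

function yc :: "complex \<Rightarrow> complex \<Rightarrow> complex \<Rightarrow> nat \<Rightarrow> complex" where
  "yc c b w n = (if n = 0 then 0 else
      w * (\<Sum>i\<in>{1..<n}. yc c b w i * yc c b w (n - i))
      + c * w * yc c b w (n - 1) + (if n = 1 then b else 0))"
  by auto
termination by (relation "measure (\<lambda>(c,b,w,n). n)") auto

declare yc.simps[simp del]

lemma yc0[simp]: "yc c b w 0 = 0"
  by (subst yc.simps) simp

lemma sq_nth:
  fixes y :: "complex fps"
  assumes "y $ 0 = 0"
  shows "(y * y) $ n = (\<Sum>i\<in>{1..<n}. y $ i * y $ (n - i))"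
proof (cases n)
  case 0 then show ?thesis using assms by simp
next
  case (Suc m)
  have "(y * y) $ n = (\<Sum>i=0..n. y$i * y$(n - i))" by (rule fps_mult_nth)
  also have "\<dots> = (\<Sum>i\<in>{1..<n}. y $ i * y $ (n - i))"
    by (rule sum.mono_neutral_right) (use assms Suc in \<open>auto simp: not_less_eq_eq\<close>)
  finally show ?thesis .
qed

definition Eq :: "complex \<Rightarrow> complex \<Rightarrow> complex \<Rightarrow> complex fps \<Rightarrow> bool" where
  "Eq c b w y \<longleftrightarrow> y * (1 - fps_const w * y) = fps_X * (fps_const (c * w) * y + fps_const b)"

definition Rec :: "complex \<Rightarrow> complex \<Rightarrow> complex \<Rightarrow> (nat \<Rightarrow> complex) \<Rightarrow> nat \<Rightarrow> complex" where
  "Rec c b w f n = (if n = 0 then 0 else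
      w * (\<Sum>i\<in>{1..<n}. f i * f (n - i))
      + c * w * f (n - 1) + (if n = 1 then b else 0))"

lemma Eq_coeffs:
  fixes y :: "complex fps"
  assumes "y $ 0 = 0"
  shows "(y * (1 - fps_const w * y)) $ n = y $ n - w * (\<Sum>i\<in>{1..<n}. y $ i * y $ (n - i))"
    and "(fps_X * (fps_const (c * w) * y + fps_const b)) $ n
          = (if n = 0 then 0 else c * w * y $ (n - 1) + (if n = 1 then b else 0))"
proof -
  have "y * (1 - fps_const w * y) = y - fps_const w * (y * y)" by (simp add: algebra_simps)
  then show "(y * (1 - fps_const w * y)) $ n = y $ n - w * (\<Sum>i\<in>{1..<n}. y $ i * y $ (n - i))"
    using sq_nth[OF assms] by simp
  show "(fps_X * (fps_const (c * w) * y + fps_const b)) $ n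
          = (if n = 0 then 0 else c * w * y $ (n - 1) + (if n = 1 then b else 0))"
    by auto
qed


lemma Eq_iff:
  fixes y :: "complex fps"
  assumes "y $ 0 = 0"
  shows "Eq c b w y \<longleftrightarrow> (\<forall>n. y $ n = Rec c b w (\<lambda>k. y $ k) n)"
proof -
  have "Eq c b w y \<longleftrightarrow> (\<forall>n. (y * (1 - fps_const w * y)) $ n = (fps_X * (fps_const (c * w) * y + fps_const b)) $ n)"
    unfolding Eq_def fps_eq_iff ..
  also have "\<dots> \<longleftrightarrow> (\<forall>n. y $ n = Rec c b w (\<lambda>k. y $ k) n)"
  proof (intro all_cong1)
    fix n
    show "((y * (1 - fps_const w * y)) $ n = (fps_X * (fps_const (c * w) * y + fps_const b)) $ n)
      \<longleftrightarrow> y $ n = Rec c b w (\<lambda>k. y $ k) n"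
      unfolding Eq_coeffs[OF assms] Rec_def using assms
      by (cases "n = 0") (auto simp: algebra_simps)
  qed
  finally show ?thesis .
qed


lemma yc_Rec: "yc c b w n = Rec c b w (yc c b w) n"
  unfolding Rec_def by (subst yc.simps) simp

lemma Rec_unique:
  assumes "\<And>n. f n = Rec c b w f n"
  shows "f n = yc c b w n"
proof (induction n rule: less_induct)
  case (less n)
  have "f n = Rec c b w f n" by (rule assms)
  also have "\<dots> = Rec c b w (yc c b w) n"
    unfolding Rec_def using less by (auto intro!: sum.cong)
  also have "\<dots> = yc c b w n" by (rule yc_Rec[symmetric])
  finally show ?case .
qed

lemma nth_Abs: "fps_nth (Abs_fps f) = f"
  by (rule ext) simp

lemma yc_Eq: "Eq c b w (Abs_fps (yc c b w))"
  by (subst Eq_iff) (auto simp: nth_Abs intro: yc_Rec)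

lemma Eq_unique:
  assumes "y $ 0 = 0" "Eq c b w y" shows "y = Abs_fps (yc c b w)"
proof -
  have r: "\<And>n. y $ n = Rec c b w (fps_nth y) n" using Eq_iff[OF assms(1)] assms(2) by blast
  have "y $ n = yc c b w n" for n by (rule Rec_unique[of "fps_nth y", OF r])
  then show ?thesis by (simp add: fps_eq_iff)
qed

lemma yc_scale: "yc c b w n = w ^ (n - 1) * yc c b 1 n"
proof (induction n rule: less_induct)
  case (less n)
  show ?case
  proof (cases n)
    case 0 then show ?thesis by simp
  next
    case (Suc m)
    have pw: "w * (w ^ (i - 1) * w ^ (Suc m - i - 1)) = w ^ m" if "i \<in> {1..<Suc m}" for i
    proof -
      have "w * w ^ (i - 1) = w ^ i" using that by (cases i) auto
      then have "w * (w ^ (i - 1) * w ^ (Suc m - i - 1)) = w ^ (i + (m - i))"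
        by (simp add: power_add mult.assoc[symmetric])
      also have "i + (m - i) = m" using that by auto
      finally show ?thesis .
    qed
    have S: "w * (\<Sum>i\<in>{1..<Suc m}. yc c b w i * yc c b w (Suc m - i))
       = w ^ m * (\<Sum>i\<in>{1..<Suc m}. yc c b 1 i * yc c b 1 (Suc m - i))"
      unfolding sum_distrib_left
    proof (rule sum.cong)
      fix i assume i: "i \<in> {1..<Suc m}"
      have "w * (yc c b w i * yc c b w (Suc m - i))
          = w * (w ^ (i - 1) * w ^ (Suc m - i - 1)) * (yc c b 1 i * yc c b 1 (Suc m - i))"
        using less.IH[of i] less.IH[of "Suc m - i"] i Suc by (simp add: algebra_simps)
      also have "\<dots> = w ^ m * (yc c b 1 i * yc c b 1 (Suc m - i))" using pw[OF i] by simp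
      finally show "w * (yc c b w i * yc c b w (Suc m - i)) = w ^ m * (yc c b 1 i * yc c b 1 (Suc m - i))" .
    qed simp
    have C: "c * w * yc c b w m = w ^ m * (c * 1 * yc c b 1 m)"
    proof (cases m)
      case 0 then show ?thesis by simp
    next
      case (Suc k)
      then show ?thesis using less.IH[of m] \<open>n = Suc m\<close> by simp
    qed
    have e1: "yc c b w (Suc m) = w * (\<Sum>i\<in>{1..<Suc m}. yc c b w i * yc c b w (Suc m - i))
      + c * w * yc c b w m + (if m = 0 then b else 0)"
      using yc.simps[of c b w "Suc m"] by simp
    have e2: "yc c b 1 (Suc m) = (\<Sum>i\<in>{1..<Suc m}. yc c b 1 i * yc c b 1 (Suc m - i))
      + c * yc c b 1 m + (if m = 0 then b else 0)"
      using yc.simps[of c b 1 "Suc m"] by simp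
    show ?thesis unfolding Suc e1 e2 S C
      by (cases m) (simp_all add: algebra_simps)
  qed
qed



lemma Phi_Eq:
  fixes y :: "complex fps"
  assumes y0: "y $ 0 = 0"
  shows "y = fps_X * Phi a b x y \<longleftrightarrow> Eq (a - b) b ((b - x) / (b - a)) y"
proof -
  define w where "w = (b - x) / (b - a)"
  define D where "D = 1 - fps_const w * y"
  define N where "N = fps_const ((a - b) * w) * y + fps_const b"
  have D0: "D $ 0 \<noteq> 0" using y0 by (simp add: D_def)
  have ID: "inverse D * D = 1" using D0 by (rule inverse_mult_eq_1)
  have P: "Phi a b x y = N * inverse D" unfolding Phi_def Let_def N_def D_def w_def ..
  have E: "Eq (a - b) b w y \<longleftrightarrow> y * D = fps_X * N" unfolding Eq_def D_def N_def ..
  show ?thesis unfolding w_def[symmetric] E P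
  proof
    assume "y = fps_X * (N * inverse D)"
    then have "y * D = fps_X * N * (inverse D * D)" by (simp add: ac_simps)
    then show "y * D = fps_X * N" using ID by simp
  next
    assume h: "y * D = fps_X * N"
    have "y = y * (inverse D * D)" using ID by simp
    also have "\<dots> = (y * D) * inverse D" by (simp add: ac_simps)
    also have "\<dots> = fps_X * (N * inverse D)" using h by (simp add: ac_simps)
    finally show "y = fps_X * (N * inverse D)" .
  qed
qed

definition sc :: "complex \<Rightarrow> complex fps \<Rightarrow> complex fps" where
  "sc w f = Abs_fps (\<lambda>n. w ^ n * f $ n)"

lemma sc_mult: "sc w (f * g) = sc w f * sc w g"
proof (rule fps_ext)
  fix n
  have "sc w (f * g) $ n = (\<Sum>i=0..n. w ^ n * (f $ i * g $ (n - i)))"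
    by (simp add: sc_def fps_mult_nth sum_distrib_left)
  also have "\<dots> = (\<Sum>i=0..n. (w ^ i * f $ i) * (w ^ (n - i) * g $ (n - i)))"
  proof (rule sum.cong)
    fix i assume "i \<in> {0..n}"
    then have "w ^ n = w ^ i * w ^ (n - i)" by (simp add: power_add[symmetric])
    then show "w ^ n * (f $ i * g $ (n - i)) = (w ^ i * f $ i) * (w ^ (n - i) * g $ (n - i))"
      by (simp add: ac_simps)
  qed simp
  also have "\<dots> = (sc w f * sc w g) $ n" by (simp add: sc_def fps_mult_nth)
  finally show "sc w (f * g) $ n = (sc w f * sc w g) $ n" .
qed

lemma sc_one: "sc w 1 = 1"
  by (rule fps_ext) (simp add: sc_def)

lemma sc_diff: "sc w (f - g) = sc w f - sc w g"
  by (rule fps_ext) (simp add: sc_def algebra_simps)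

lemma key_alg:
  fixes F G Y X W B C :: "'a::comm_ring_1"
  assumes "G * (1 - W * Y) = 1" "F * (1 - Y) = 1" "Y * (1 - W * Y) = X * (C * W * Y + B)"
  shows "(W - 1) * (F - 1) + X * ((B + C * W) * F) = (B + C) * W * (X * G)"
proof -
  note h1 = assms(1) and h2 = assms(2) and h3 = assms(3)
  have e1: "F - 1 = F * Y" using h2 by (simp add: algebra_simps)
  have "(1 - W * Y) * ((W - 1) * Y + X * (B + C * W))
      = (W - 1) * (Y * (1 - W * Y)) + X * (B + C * W) * (1 - W * Y)" by (simp add: algebra_simps)
  also have "\<dots> = (W - 1) * (X * (C * W * Y + B)) + X * (B + C * W) * (1 - W * Y)" using h3 by simp
  also have "\<dots> = (B + C) * W * X * (1 - Y)" by (simp add: algebra_simps)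
  finally have e2: "(1 - W * Y) * ((W - 1) * Y + X * (B + C * W)) = (B + C) * W * X * (1 - Y)" .
  have "(W - 1) * (F - 1) + X * ((B + C * W) * F) = F * ((W - 1) * Y + X * (B + C * W))"
    unfolding e1 by (simp add: algebra_simps)
  also have "\<dots> = F * ((W - 1) * Y + X * (B + C * W)) * (G * (1 - W * Y))" using h1 by simp
  also have "\<dots> = F * G * ((1 - W * Y) * ((W - 1) * Y + X * (B + C * W)))" by (simp add: ac_simps)
  also have "\<dots> = (B + C) * W * (X * G) * (F * (1 - Y))" unfolding e2 by (simp add: ac_simps)
  also have "\<dots> = (B + C) * W * (X * G)" using h2 by simp
  finally show ?thesis .
qed


lemma inv_nth0: "(f::complex fps) $ 0 = 0 \<Longrightarrow> inverse (1 - f) * (1 - f) = 1"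
  by (rule inverse_mult_eq_1) simp

lemma kern:
  fixes c b w :: complex
  shows "(w - 1) * inverse (1 - Abs_fps (yc c b w)) $ Suc n
     + (b + c * w) * inverse (1 - Abs_fps (yc c b w)) $ n
     = (b + c) * w ^ Suc n * inverse (1 - Abs_fps (yc c b 1)) $ n"
proof -
  define Y where "Y = Abs_fps (yc c b w)"
  define Z where "Z = Abs_fps (yc c b 1)"
  define F where "F = inverse (1 - Y)"
  define Fa where "Fa = inverse (1 - Z)"
  have Y0: "Y $ 0 = 0" by (simp add: Y_def)
  have Z0: "Z $ 0 = 0" by (simp add: Z_def)
  have scZ: "sc w Z = fps_const w * Y"
  proof (rule fps_ext)
    fix n show "sc w Z $ n = (fps_const w * Y) $ n"
    proof (cases n)
      case 0 then show ?thesis by (simp add: sc_def Z_def Y_def)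
    next
      case (Suc m)
      then show ?thesis using yc_scale[of c b w "Suc m"] by (simp add: sc_def Z_def Y_def)
    qed
  qed
  have h1: "sc w Fa * (1 - fps_const w * Y) = 1"
  proof -
    have "sc w Fa * (1 - fps_const w * Y) = sc w Fa * sc w (1 - Z)" by (simp add: sc_diff sc_one scZ)
    also have "\<dots> = sc w (Fa * (1 - Z))" by (simp add: sc_mult)
    also have "Fa * (1 - Z) = 1" unfolding Fa_def by (rule inv_nth0[OF Z0])
    finally show ?thesis by (simp add: sc_one)
  qed
  have h2: "F * (1 - Y) = 1" unfolding F_def by (rule inv_nth0[OF Y0])
  have h3: "Y * (1 - fps_const w * Y) = fps_X * (fps_const c * fps_const w * Y + fps_const b)"
    using yc_Eq[of c b w] unfolding Eq_def Y_def by simp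
  have K: "(fps_const w - 1) * (F - 1) + fps_X * ((fps_const b + fps_const c * fps_const w) * F)
      = (fps_const b + fps_const c) * fps_const w * (fps_X * sc w Fa)"
    by (rule key_alg[OF h1 h2 h3])
  have c1: "fps_const w - 1 = fps_const (w - 1)" by (metis fps_const_1_eq_1 fps_const_sub)
  have c2: "fps_const b + fps_const c * fps_const w = fps_const (b + c * w)" by simp
  have c3: "(fps_const b + fps_const c) * fps_const w = fps_const ((b + c) * w)" by simp
  have "((fps_const w - 1) * (F - 1) + fps_X * ((fps_const b + fps_const c * fps_const w) * F)) $ Suc n
      = ((fps_const b + fps_const c) * fps_const w * (fps_X * sc w Fa)) $ Suc n"
    using K by simp
  then have "(w - 1) * F $ Suc n + (b + c * w) * F $ n = (b + c) * w * (w ^ n * Fa $ n)"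
    unfolding c1 c2 c3 by (simp add: sc_def)
  then show ?thesis unfolding F_def Fa_def Y_def Z_def by (simp add: ac_simps)
qed


lemma inv_rec:
  fixes Y :: "complex fps"
  assumes Y0: "Y $ 0 = 0" and n: "n \<ge> 1"
  shows "inverse (1 - Y) $ n = (\<Sum>i=1..n. Y $ i * inverse (1 - Y) $ (n - i))"
proof -
  define F where "F = inverse (1 - Y)"
  have "(1 - Y) * F = 1" unfolding F_def by (rule inverse_mult_eq_1') (simp add: Y0)
  then have "((1 - Y) * F) $ n = 0" using n by simp
  then have "(\<Sum>i=0..n. (1 - Y) $ i * F $ (n - i)) = 0" unfolding fps_mult_nth .
  moreover have "(\<Sum>i=0..n. (1 - Y) $ i * F $ (n - i))
      = (1 - Y) $ 0 * F $ (n - 0) + (\<Sum>i=Suc 0..n. (1 - Y) $ i * F $ (n - i))"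
    by (rule sum.atLeast_Suc_atMost) simp
  moreover have "(\<Sum>i=Suc 0..n. (1 - Y) $ i * F $ (n - i)) = - (\<Sum>i=1..n. Y $ i * F $ (n - i))"
    unfolding sum_negf[symmetric] by (rule sum.cong) auto
  ultimately show ?thesis unfolding F_def[symmetric] using Y0 by simp
qed

definition isp :: "(complex \<Rightarrow> complex) \<Rightarrow> bool" where
  "isp f \<longleftrightarrow> (\<exists>p. \<forall>x. poly p x = f x)"

lemma isp_const: "isp (\<lambda>x. k)"
  unfolding isp_def by (rule exI[of _ "[:k:]"]) simp

lemma isp_add: "isp f \<Longrightarrow> isp g \<Longrightarrow> isp (\<lambda>x. f x + g x)"
  unfolding isp_def by (metis poly_add)

lemma isp_mult: "isp f \<Longrightarrow> isp g \<Longrightarrow> isp (\<lambda>x. f x * g x)"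
  unfolding isp_def by (metis poly_mult)

lemma isp_pow: "isp f \<Longrightarrow> isp (\<lambda>x. f x ^ k)"
  unfolding isp_def by (metis poly_power)

lemma isp_sum: "finite A \<Longrightarrow> (\<And>i. i \<in> A \<Longrightarrow> isp (f i)) \<Longrightarrow> isp (\<lambda>x. \<Sum>i\<in>A. f i x)"
proof (induction A rule: finite_induct)
  case empty then show ?case using isp_const[of 0] by simp
next
  case (insert j A)
  then show ?case by (simp add: isp_add)
qed

definition wx :: "complex \<Rightarrow> complex \<Rightarrow> complex \<Rightarrow> complex" where
  "wx a b x = (b - x) / (b - a)"

definition Fc :: "complex \<Rightarrow> complex \<Rightarrow> complex \<Rightarrow> nat \<Rightarrow> complex" where
  "Fc a b x n = inverse (1 - Abs_fps (yc (a - b) b (wx a b x))) $ n"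

lemma isp_wx: "isp (wx a b)"
  unfolding isp_def wx_def
  by (rule exI[of _ "[: b / (b - a), -1 / (b - a) :]"]) (simp add: diff_divide_distrib)

lemma isp_Fc: "isp (\<lambda>x. Fc a b x n)"
proof (induction n rule: less_induct)
  case (less n)
  show ?case
  proof (cases "n = 0")
    case True
    then show ?thesis unfolding Fc_def using isp_const[of 1] by simp
  next
    case False
    then have "Fc a b x n = (\<Sum>i=1..n. wx a b x ^ (i - 1) * yc (a - b) b 1 i * Fc a b x (n - i))" for x
      unfolding Fc_def by (subst inv_rec) (auto simp: yc_scale[of _ _ "wx a b x"] intro!: sum.cong)
    moreover have "isp (\<lambda>x. \<Sum>i=1..n. wx a b x ^ (i - 1) * yc (a - b) b 1 i * Fc a b x (n - i))"
    proof (rule isp_sum)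
      fix i assume "i \<in> {1..n}"
      then have "n - i < n" by auto
      then show "isp (\<lambda>x. wx a b x ^ (i - 1) * yc (a - b) b 1 i * Fc a b x (n - i))"
        using less isp_pow[OF isp_wx] isp_const by (intro isp_mult) auto
    qed simp
    ultimately show ?thesis by simp
  qed
qed

lemma kern2:
  assumes ab: "a \<noteq> b"
  shows "(x - a) * (a - b) ^ n * Fc a b x (Suc n)
      = a * (x - b) ^ Suc n * Fc a b a n - x * (a - b) ^ Suc n * Fc a b x n"
proof -
  define c where "c = a - b"
  define w where "w = wx a b x"
  have c0: "c \<noteq> 0" using ab by (simp add: c_def)
  have w1: "wx a b a = 1" using ab by (simp add: wx_def)
  have f1: "(w - 1) * c = x - a" using c0 ab by (simp add: w_def wx_def c_def field_simps)
  have f2: "b + c * w = x" using c0 ab by (simp add: w_def wx_def c_def field_simps)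
  have f3: "w * c = x - b" using c0 ab by (simp add: w_def wx_def c_def field_simps)
  have f4: "b + c = a" by (simp add: c_def)
  have K: "(w - 1) * Fc a b x (Suc n) + (b + c * w) * Fc a b x n = (b + c) * w ^ Suc n * Fc a b a n"
    using kern[of w c b n] unfolding Fc_def w1 w_def c_def by simp
  have "c ^ Suc n * ((w - 1) * Fc a b x (Suc n) + (b + c * w) * Fc a b x n)
      = c ^ Suc n * ((b + c) * w ^ Suc n * Fc a b a n)" using K by simp
  then have "((w - 1) * c) * c ^ n * Fc a b x (Suc n) + (b + c * w) * c ^ Suc n * Fc a b x n
      = (b + c) * (w * c) ^ Suc n * Fc a b a n"
    by (simp add: algebra_simps power_mult_distrib)
  then have "(x - a) * c ^ n * Fc a b x (Suc n) + x * c ^ Suc n * Fc a b x n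
      = a * (x - b) ^ Suc n * Fc a b a n" by (simp only: f1 f2 f3 f4)
  then show ?thesis unfolding c_def by (simp add: algebra_simps)
qed

lemma gpoly_Fc:
  assumes ab: "a \<noteq> b"
  shows "poly (gpoly a b n) x = Fc a b x n"
proof (induction n arbitrary: x)
  case 0
  then show ?case by (simp add: Fc_def)
next
  case (Suc n)
  obtain P where P: "\<And>x. poly P x = Fc a b x (Suc n)" using isp_Fc[of a b "Suc n"] unfolding isp_def by blast
  define D where "D = smult ((a - b) ^ n) [:-a, 1:]"
  have D0: "D \<noteq> 0" using ab by (simp add: D_def)
  have R: "smult (a * poly (gpoly a b n) a) ([:-b, 1:] ^ Suc n)
      - smult ((a - b) ^ Suc n) (pCons 0 (gpoly a b n)) = D * P"
  proof (rule iffD1[OF poly_eq_poly_eq_iff], rule ext)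
    fix x
    have "poly (smult (a * poly (gpoly a b n) a) ([:-b, 1:] ^ Suc n)
      - smult ((a - b) ^ Suc n) (pCons 0 (gpoly a b n))) x
      = a * (x - b) ^ Suc n * Fc a b a n - x * (a - b) ^ Suc n * Fc a b x n"
      using Suc.IH[of a] Suc.IH[of x] by (simp add: algebra_simps)
    also have "\<dots> = (x - a) * (a - b) ^ n * Fc a b x (Suc n)" using kern2[OF ab] by simp
    also have "\<dots> = poly (D * P) x" using P[of x] by (simp add: D_def algebra_simps)
    finally show "poly (smult (a * poly (gpoly a b n) a) ([:-b, 1:] ^ Suc n)
      - smult ((a - b) ^ Suc n) (pCons 0 (gpoly a b n))) x = poly (D * P) x" .
  qed
  have "gpoly a b (Suc n) = (D * P) div D" by (subst gpoly.simps) (simp only: R D_def)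
  also have "\<dots> = P" using D0 by simp
  finally show ?case using P by simp
qed


theorem mainTheorem6:
  fixes a b x :: complex
  assumes "a \<noteq> b"
  shows "(\<exists>!y :: complex fps. fps_nth y 0 = 0 \<and> y = fps_X * Phi a b x y)
    \<and> (\<forall>y :: complex fps. fps_nth y 0 = 0 \<and> y = fps_X * Phi a b x y \<longrightarrow>
         (\<forall>n. poly (gpoly a b n) x = fps_nth (inverse (1 - y)) n))"
proof -
  define y0 where "y0 = Abs_fps (yc (a - b) b ((b - x) / (b - a)))"
  have y00: "y0 $ 0 = 0" by (simp add: y0_def)
  have sol: "y0 = fps_X * Phi a b x y0"
    using Phi_Eq[OF y00] yc_Eq unfolding y0_def by simp
  have uni: "y = y0" if "y $ 0 = 0" "y = fps_X * Phi a b x y" for y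
    using Eq_unique[OF that(1)] Phi_Eq[OF that(1)] that(2) unfolding y0_def by blast
  have val: "poly (gpoly a b n) x = inverse (1 - y0) $ n" for n
    using gpoly_Fc[OF assms] unfolding Fc_def wx_def y0_def by simp
  show ?thesis
  proof
    show "\<exists>!y :: complex fps. y $ 0 = 0 \<and> y = fps_X * Phi a b x y"
      using y00 sol uni by blast
  next
    show "\<forall>y :: complex fps. y $ 0 = 0 \<and> y = fps_X * Phi a b x y \<longrightarrow>
         (\<forall>n. poly (gpoly a b n) x = inverse (1 - y) $ n)"
      using uni val by blast
  qed
qed

end
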